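(* For a connected hypergraph $\mathcal{G}=(V,E)$ on $n$ vertices, $$\operatorname{diam}(\mathcal{G})\ge\frac{4}{n\,(r(\mathcal{G})-1)\,\lambda_2(L_{\mathcal{G}})}.$$
   Context: A hypergraph $\mathcal{G}=(V,E)$ has a finite vertex set $V$ and a set $E$ of subsets of $V$ (edges), each of cardinality at least $2$. The rank $r(\mathcal{G})$ is the maximum edge cardinality. The degree $d_i$ is the number of edges containing $i$. The Laplacian $L_{\mathcal{G}}$ has $(L_{\mathcal{G}})_{ii}=d_i$ and $(L_{\mathcal{G}})_{ij}=-\sum_{e\in E,\, i,j\in e}\frac{1}{|e|-1}$ for $i\ne j$; $\lambda_2(L_{\mathcal{G}})$ is its second smallest eigenvalue. A path of length $l$ between $v_0,v_l$ is an alternating sequence $v_0e_1v_1\dots e_lv_l$ of distinct vertices and distinct edges with $v_{i-1},v_i\in e_i$; $d(i,j)$ is the minimum length of an $i$–$j$ path and $\operatorname{diam}(\mathcal{G})=\max_{i,j}d(i,j)$; connected means all distances are finite. *)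

theory Defs
  imports "Jordan_Normal_Form.Char_Poly"
begin

definition hypergraph :: "'a set \<Rightarrow> 'a set set \<Rightarrow> bool" where
  "hypergraph V E \<longleftrightarrow> finite V \<and> (\<forall>e\<in>E. e \<subseteq> V \<and> card e \<ge> 2)"

definition hrank :: "'a set set \<Rightarrow> nat" where
  "hrank E = Max (card ` E)"

definition hdegree :: "'a set set \<Rightarrow> 'a \<Rightarrow> nat" where
  "hdegree E i = card {e\<in>E. i \<in> e}"

definition hlap :: "'a set set \<Rightarrow> 'a \<Rightarrow> 'a \<Rightarrow> real" where
  "hlap E i j = (if i = j then real (hdegree E i)
                 else - (\<Sum>e\<in>{e\<in>E. i \<in> e \<and> j \<in> e}. 1 / (real (card e) - 1)))"

text \<open>A fixed enumeration of the vertex set, used to turn the Laplacian into a matrix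
  (the spectrum does not depend on this choice).\<close>
definition vertex_enum :: "'a set \<Rightarrow> nat \<Rightarrow> 'a" where
  "vertex_enum V = (SOME f. bij_betw f {0..<card V} V)"

definition lap_matrix :: "'a set \<Rightarrow> 'a set set \<Rightarrow> real mat" where
  "lap_matrix V E = mat (card V) (card V) (\<lambda>(i, j). hlap E (vertex_enum V i) (vertex_enum V j))"

text \<open>The k-th smallest eigenvalue (k \<ge> 1), counted with (algebraic) multiplicity:
  the least t such that at least k eigenvalues, with multiplicity, are \<le> t.\<close>
definition kth_eigenvalue :: "nat \<Rightarrow> real mat \<Rightarrow> real" where
  "kth_eigenvalue k A =
     Inf {t. k \<le> (\<Sum>\<mu>\<in>{\<mu>. poly (char_poly A) \<mu> = 0 \<and> \<mu> \<le> t}. order \<mu> (char_poly A))}"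

definition lambda2 :: "'a set \<Rightarrow> 'a set set \<Rightarrow> real" where
  "lambda2 V E = kth_eigenvalue 2 (lap_matrix V E)"

text \<open>A path v_0 e_1 v_1 ... e_l v_l: distinct vertices vs (length l+1), distinct edges es
  (length l), consecutive vertices v_{i-1}, v_i both in e_i.\<close>
definition hpath :: "'a set set \<Rightarrow> 'a list \<Rightarrow> 'a set list \<Rightarrow> bool" where
  "hpath E vs es \<longleftrightarrow> length vs = length es + 1 \<and> distinct vs \<and> distinct es \<and> set es \<subseteq> E \<and>
     (\<forall>k < length es. vs ! k \<in> es ! k \<and> vs ! (k + 1) \<in> es ! k)"

definition hpath_between :: "'a set set \<Rightarrow> 'a \<Rightarrow> 'a \<Rightarrow> nat \<Rightarrow> bool" where
  "hpath_between E i j l \<longleftrightarrow>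
     (\<exists>vs es. hpath E vs es \<and> hd vs = i \<and> last vs = j \<and> length es = l)"

definition hconnected :: "'a set \<Rightarrow> 'a set set \<Rightarrow> bool" where
  "hconnected V E \<longleftrightarrow> (\<forall>i\<in>V. \<forall>j\<in>V. \<exists>l. hpath_between E i j l)"

definition hdist :: "'a set set \<Rightarrow> 'a \<Rightarrow> 'a \<Rightarrow> nat" where
  "hdist E i j = (LEAST l. hpath_between E i j l)"

definition hdiam :: "'a set \<Rightarrow> 'a set set \<Rightarrow> nat" where
  "hdiam V E = Max {hdist E i j | i j. i \<in> V \<and> j \<in> V}"

end

theory Submission
  imports Defs "Jordan_Normal_Form.Schur_Decomposition"
begin

lemma cs_sum: fixes d :: "nat \<Rightarrow> real"
  shows "(\<Sum>k<D. d k)^2 \<le> real D * (\<Sum>k<D. (d k)^2)"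
proof -
  have "0 \<le> (\<Sum>k<D. \<Sum>j<D. (d k - d j)^2)" by (intro sum_nonneg) auto
  also have "(\<Sum>k<D. \<Sum>j<D. (d k - d j)^2) = 
     (\<Sum>k<D. \<Sum>j<D. (d k)^2) - 2 * (\<Sum>k<D. \<Sum>j<D. d k * d j) + (\<Sum>k<D. \<Sum>j<D. (d j)^2)"
    by (simp add: power2_diff sum.distrib sum_subtractf sum_distrib_left algebra_simps)
  also have "(\<Sum>k<D. \<Sum>j<D. d k * d j) = (\<Sum>k<D. d k)^2"
    by (simp add: power2_eq_square sum_product)
  also have "(\<Sum>k<D. \<Sum>j<D. (d k)^2) = real D * (\<Sum>k<D. (d k)^2)"
    by (simp add: sum_distrib_left)
  also have "(\<Sum>k<D. \<Sum>j<D. (d j)^2) = real D * (\<Sum>k<D. (d k)^2)"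
    by simp
  finally show ?thesis by simp
qed

lemma maxmin_bound:
  fixes y :: "'a \<Rightarrow> real"
  assumes fin: "finite V" and sum0: "(\<Sum>a\<in>V. y a) = 0"
    and u: "u \<in> V" and w: "w \<in> V" and M: "\<forall>a\<in>V. y a \<le> y u" and m: "\<forall>a\<in>V. y w \<le> y a"
  shows "4 * (\<Sum>a\<in>V. (y a)^2) \<le> real (card V) * (y u - y w)^2"
proof -
  have "0 \<le> (\<Sum>a\<in>V. (y u - y a) * (y a - y w))"
    using M m by (intro sum_nonneg) auto
  also have "(\<Sum>a\<in>V. (y u - y a) * (y a - y w)) =
     (y u + y w) * (\<Sum>a\<in>V. y a) - (\<Sum>a\<in>V. (y a)^2) - real (card V) * (y u * y w)"
    by (simp add: algebra_simps sum.distrib sum_subtractf sum_distrib_left power2_eq_square)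
  finally have "(\<Sum>a\<in>V. (y a)^2) \<le> - real (card V) * (y u * y w)" using sum0 by simp
  also have "\<dots> \<le> real (card V) * (y u - y w)^2 / 4"
  proof -
    have h0: "0 \<le> (y u + y w)^2" by simp
    have h1: "(y u - y w)^2/4 + y u * y w = (y u + y w)^2/4" by (simp add: power2_eq_square field_simps)
    have "- (y u * y w) \<le> (y u - y w)^2 / 4" using h0 h1 by linarith
    hence "real (card V) * (- (y u * y w)) \<le> real (card V) * ((y u - y w)^2 / 4)"
      by (rule mult_left_mono) simp
    thus ?thesis by simp
  qed
  finally show ?thesis by simp
qed


definition ew :: "'a set \<Rightarrow> real" where "ew e = 1 / (real (card e) - 1)"
definition Tq :: "('a \<Rightarrow> real) \<Rightarrow> 'a set \<Rightarrow> real" where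
  "Tq y e = ew e / 2 * (\<Sum>a\<in>e. \<Sum>b\<in>e. (y a - y b)^2)"

lemma hyp_facts: assumes "hypergraph V E"
  shows "finite V" "finite E" "\<And>e. e \<in> E \<Longrightarrow> e \<subseteq> V" "\<And>e. e \<in> E \<Longrightarrow> finite e"
    "\<And>e. e \<in> E \<Longrightarrow> 2 \<le> card e"
proof -
  show fV: "finite V" using assms unfolding hypergraph_def by auto
  show sub: "\<And>e. e \<in> E \<Longrightarrow> e \<subseteq> V" using assms unfolding hypergraph_def by auto
  show "finite E" using finite_subset[of E "Pow V"] sub fV by auto
  show "\<And>e. e \<in> E \<Longrightarrow> finite e" using sub fV finite_subset by blast
  show "\<And>e. e \<in> E \<Longrightarrow> 2 \<le> card e" using assms unfolding hypergraph_def by auto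
qed

lemma hlap_sym: "hlap E a b = hlap E b a"
  unfolding hlap_def by (simp add: conj_commute)

lemma hlap_off: "a \<noteq> b \<Longrightarrow> hlap E a b = - (\<Sum>e\<in>{e\<in>E. a \<in> e \<and> b \<in> e}. ew e)"
  unfolding hlap_def ew_def by simp

lemma row_sum: assumes H: "hypergraph V E" and a: "a \<in> V"
  shows "(\<Sum>u\<in>V. hlap E a u) = 0"
proof -
  note hf = hyp_facts[OF H]
  have "(\<Sum>u\<in>V. hlap E a u) = hlap E a a + (\<Sum>u\<in>V-{a}. hlap E a u)"
    using hf(1) a by (simp add: sum.remove)
  also have "(\<Sum>u\<in>V-{a}. hlap E a u) = - (\<Sum>u\<in>V-{a}. \<Sum>e\<in>{e\<in>{e\<in>E. a \<in> e}. u \<in> e}. ew e)"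
  proof -
    have "hlap E a u = - (\<Sum>e\<in>{e\<in>{e\<in>E. a \<in> e}. u \<in> e}. ew e)" if u: "u \<in> V-{a}" for u
    proof -
      have "{e\<in>{e\<in>E. a \<in> e}. u \<in> e} = {e\<in>E. a \<in> e \<and> u \<in> e}" by auto
      thus ?thesis using hlap_off[of a u E] u by auto
    qed
    thus ?thesis by (simp add: sum_negf[symmetric])
  qed
  also have "(\<Sum>u\<in>V-{a}. \<Sum>e\<in>{e\<in>{e\<in>E. a \<in> e}. u \<in> e}. ew e)
     = (\<Sum>e\<in>{e\<in>E. a \<in> e}. \<Sum>u\<in>{u\<in>V-{a}. u \<in> e}. ew e)"
    by (rule sum.swap_restrict, insert hf, auto)
  also have "\<dots> = (\<Sum>e\<in>{e\<in>E. a \<in> e}. 1)"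
  proof (rule sum.cong[OF refl])
    fix e assume e: "e \<in> {e\<in>E. a \<in> e}"
    have "{u\<in>V-{a}. u \<in> e} = e - {a}" using hf(3) e by auto
    moreover have "card (e - {a}) = card e - 1" using e by simp
    moreover have "2 \<le> card e" using hf(5) e by auto
    ultimately show "(\<Sum>u\<in>{u\<in>V-{a}. u \<in> e}. ew e) = 1"
      by (simp add: ew_def of_nat_diff)
  qed
  also have "(\<Sum>e\<in>{e\<in>E. a \<in> e}. 1::real) = real (hdegree E a)"
    unfolding hdegree_def by simp
  finally show ?thesis unfolding hlap_def by simp
qed

lemma quad: assumes H: "hypergraph V E"
  shows "(\<Sum>a\<in>V. \<Sum>b\<in>V. y a * hlap E a b * y b) = (\<Sum>e\<in>E. Tq y e)"
proof -
  note hf = hyp_facts[OF H]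
  let ?M = "hlap E"
  have r0: "(\<Sum>a\<in>V. \<Sum>b\<in>V. ?M a b * (y a)^2) = 0"
    using row_sum[OF H] by (simp add: sum_distrib_right[symmetric])
  have r1: "(\<Sum>a\<in>V. \<Sum>b\<in>V. ?M a b * (y b)^2) = 0"
    apply (subst sum.swap)
    using row_sum[OF H] by (simp add: hlap_sym[of E _] sum_distrib_right[symmetric])
  have "(\<Sum>a\<in>V. \<Sum>b\<in>V. ?M a b * (y a - y b)^2) =
     (\<Sum>a\<in>V. \<Sum>b\<in>V. ?M a b * (y a)^2) - 2 * (\<Sum>a\<in>V. \<Sum>b\<in>V. y a * ?M a b * y b)
     + (\<Sum>a\<in>V. \<Sum>b\<in>V. ?M a b * (y b)^2)"
    by (simp add: power2_diff algebra_simps sum.distrib sum_subtractf sum_distrib_left)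
  hence s1: "(\<Sum>a\<in>V. \<Sum>b\<in>V. y a * ?M a b * y b) = - (1/2) * (\<Sum>a\<in>V. \<Sum>b\<in>V. ?M a b * (y a - y b)^2)"
    using r0 r1 by simp
  have s2: "- (?M a b * (y a - y b)^2) = (\<Sum>e\<in>E. if a \<in> e \<and> b \<in> e then ew e * (y a - y b)^2 else 0)"
    for a b
  proof (cases "a = b")
    case True
    have "(if b \<in> e \<and> b \<in> e then ew e * (y b - y b)^2 else 0) = 0" for e :: "'a set" by simp
    thus ?thesis unfolding True by simp
  next
    case False
    show ?thesis unfolding hlap_off[OF False] using hf(2)
      by (simp add: sum.inter_filter[symmetric] sum_distrib_right)
  qed
  have "(\<Sum>a\<in>V. \<Sum>b\<in>V. - (?M a b * (y a - y b)^2)) =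
      (\<Sum>a\<in>V. \<Sum>b\<in>V. \<Sum>e\<in>E. if a \<in> e \<and> b \<in> e then ew e * (y a - y b)^2 else 0)"
    by (simp only: s2)
  also have "\<dots> = (\<Sum>e\<in>E. \<Sum>a\<in>V. \<Sum>b\<in>V. if a \<in> e \<and> b \<in> e then ew e * (y a - y b)^2 else 0)"
    by (simp only: sum.swap[of _ E V] sum.swap[of _ E V])
  also have "\<dots> = (\<Sum>e\<in>E. 2 * Tq y e)"
  proof (rule sum.cong[OF refl])
    fix e assume e: "e \<in> E"
    have "(\<Sum>a\<in>V. \<Sum>b\<in>V. if a \<in> e \<and> b \<in> e then ew e * (y a - y b)^2 else 0)
       = (\<Sum>a\<in>V. if a \<in> e then (\<Sum>b\<in>V. if b \<in> e then ew e * (y a - y b)^2 else 0) else 0)"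
      by (intro sum.cong refl) auto
    also have "\<dots> = (\<Sum>a\<in>e. \<Sum>b\<in>e. ew e * (y a - y b)^2)"
    proof -
      have ee: "{a. a \<in> V \<and> a \<in> e} = e" using hf(3)[OF e] by auto
      show ?thesis using hf(1) by (simp add: sum.inter_filter[symmetric] ee)
    qed
    also have "\<dots> = 2 * Tq y e" unfolding Tq_def by (simp add: sum_distrib_left)
    finally show "(\<Sum>a\<in>V. \<Sum>b\<in>V. if a \<in> e \<and> b \<in> e then ew e * (y a - y b)^2 else 0) = 2 * Tq y e" .
  qed
  finally have "(\<Sum>a\<in>V. \<Sum>b\<in>V. - (?M a b * (y a - y b)^2)) = 2 * (\<Sum>e\<in>E. Tq y e)"
    by (simp add: sum_distrib_left)
  thus ?thesis unfolding s1 by (simp add: sum_negf)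
qed

lemma Tq_nonneg: assumes H: "hypergraph V E" and e: "e \<in> E" shows "0 \<le> Tq y e"
proof -
  have "2 \<le> card e" using hyp_facts(5)[OF H e] .
  hence "0 \<le> ew e" unfolding ew_def by simp
  thus ?thesis unfolding Tq_def by (intro mult_nonneg_nonneg sum_nonneg) auto
qed

lemma Tq_lower: assumes H: "hypergraph V E" and e: "e \<in> E" and p: "p \<in> e" and q: "q \<in> e"
  and pq: "p \<noteq> q" and r: "card e \<le> r"
  shows "(y p - y q)^2 \<le> (real r - 1) * Tq y e"
proof -
  note hf = hyp_facts[OF H]
  have fe: "finite e" using hf(4)[OF e] .
  have c2: "2 \<le> card e" using hf(5)[OF e] .
  let ?F = "\<lambda>a. \<Sum>b\<in>e. (y a - y b)^2"
  have "?F p + ?F q = (\<Sum>a\<in>{p,q}. ?F a)" using pq by simp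
  also have "\<dots> \<le> (\<Sum>a\<in>e. ?F a)" by (rule sum_mono2, insert fe p q, auto intro: sum_nonneg)
  finally have s1: "?F p + ?F q \<le> (\<Sum>a\<in>e. ?F a)" .
  have "(y p - y q)^2 \<le> ?F p" by (rule member_le_sum[OF q _ fe], auto)
  moreover have "(y q - y p)^2 \<le> ?F q" by (rule member_le_sum[OF p _ fe], auto)
  moreover have "(y q - y p)^2 = (y p - y q)^2" by (simp add: power2_commute)
  ultimately have s2: "2 * (y p - y q)^2 \<le> (\<Sum>a\<in>e. ?F a)" using s1 by linarith
  have ewpos: "0 < ew e" using c2 unfolding ew_def by simp
  have "ew e * (y p - y q)^2 \<le> Tq y e" unfolding Tq_def using s2 ewpos
    by (simp add: mult_left_mono)
  moreover have "1 \<le> (real r - 1) * ew e" using c2 r unfolding ew_def by (simp add: field_simps)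
  moreover have "0 \<le> real r - 1" using c2 r by simp
  ultimately have "(real r - 1) * (ew e * (y p - y q)^2) \<le> (real r - 1) * Tq y e"
    by (simp add: mult_left_mono)
  moreover have "(y p - y q)^2 \<le> ((real r - 1) * ew e) * (y p - y q)^2"
    using mult_right_mono[OF \<open>1 \<le> (real r - 1) * ew e\<close> zero_le_power2[of "y p - y q"]] by simp
  ultimately show ?thesis by (simp add: mult.assoc)
qed

lemma path_bound:
  assumes H: "hypergraph V E" and P: "hpath E vs es" and r: "\<forall>e\<in>E. card e \<le> r"
  shows "(y (hd vs) - y (last vs))^2 \<le> real (length es) * ((real r - 1) * (\<Sum>e\<in>E. Tq y e))"
proof -
  note hf = hyp_facts[OF H]
  let ?D = "length es"
  have lv: "length vs = ?D + 1" and dv: "distinct vs" and de: "distinct es" and sE: "set es \<subseteq> E"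
    and inn: "\<And>k. k < ?D \<Longrightarrow> vs ! k \<in> es ! k \<and> vs ! (k+1) \<in> es ! k"
    using P unfolding hpath_def by auto
  define d where "d k = y (vs ! k) - y (vs ! Suc k)" for k
  have "(\<Sum>k<?D. d k) = y (vs ! 0) - y (vs ! ?D)"
    unfolding d_def by (rule sum_lessThan_telescope')
  also have "vs ! 0 = hd vs" using lv by (cases vs, auto)
  also have "vs ! ?D = last vs" using lv by (subst last_conv_nth, auto)
  finally have tel: "y (hd vs) - y (last vs) = (\<Sum>k<?D. d k)" by simp
  have dk: "(d k)^2 \<le> (real r - 1) * Tq y (es ! k)" if k: "k < ?D" for k
  proof -
    have e: "es ! k \<in> E" using sE k by auto
    have ne: "vs ! k \<noteq> vs ! Suc k" using dv lv k by (simp add: nth_eq_iff_index_eq)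
    show ?thesis unfolding d_def
      by (rule Tq_lower[OF H e _ _ ne], insert inn[OF k] r e, auto)
  qed
  have "(\<Sum>k<?D. Tq y (es ! k)) = (\<Sum>e\<in>(\<lambda>k. es ! k) ` {..<?D}. Tq y e)"
    by (rule sum.reindex[symmetric, unfolded o_def], rule inj_onI, insert de,
        auto simp: nth_eq_iff_index_eq)
  also have "\<dots> \<le> (\<Sum>e\<in>E. Tq y e)"
    by (rule sum_mono2[OF hf(2)], insert sE Tq_nonneg[OF H], auto)
  finally have sT: "(\<Sum>k<?D. Tq y (es ! k)) \<le> (\<Sum>e\<in>E. Tq y e)" .
  have "(\<Sum>k<?D. (d k)^2) \<le> (\<Sum>k<?D. (real r - 1) * Tq y (es ! k))"
    by (rule sum_mono, rule dk, simp)
  also have "\<dots> = (real r - 1) * (\<Sum>k<?D. Tq y (es ! k))" by (simp add: sum_distrib_left)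
  also have "\<dots> \<le> (real r - 1) * (\<Sum>e\<in>E. Tq y e)" if D0: "?D \<noteq> 0"
  proof (rule mult_left_mono[OF sT])
    have "es ! 0 \<in> E" using sE D0 by auto
    hence "2 \<le> card (es ! 0)" "card (es ! 0) \<le> r" using hf(5) r by auto
    thus "0 \<le> real r - 1" by simp
  qed
  finally have s3: "?D \<noteq> 0 \<Longrightarrow> (\<Sum>k<?D. (d k)^2) \<le> (real r - 1) * (\<Sum>e\<in>E. Tq y e)" .
  have s4: "real ?D * (\<Sum>k<?D. (d k)^2) \<le> real ?D * ((real r - 1) * (\<Sum>e\<in>E. Tq y e))"
    by (cases "?D = 0", simp, rule mult_left_mono[OF s3], auto)
  have "(y (hd vs) - y (last vs))^2 \<le> real ?D * (\<Sum>k<?D. (d k)^2)"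
    unfolding tel by (rule cs_sum)
  also have "\<dots> \<le> real ?D * ((real r - 1) * (\<Sum>e\<in>E. Tq y e))"
    by (rule s4)
  finally show ?thesis .
qed


lemma deflate:
  fixes A :: "real mat"
  assumes A: "A \<in> carrier_mat n n" and sym: "A\<^sup>T = A"
  and v: "v \<in> carrier_vec n" and v0: "v \<noteq> 0\<^sub>v n" and eigen: "A *\<^sub>v v = e \<cdot>\<^sub>v v"
  and ord: "Polynomial.order e (char_poly A) \<ge> 2"
  shows "\<exists>w. w \<in> carrier_vec n \<and> w \<noteq> 0\<^sub>v n \<and> A *\<^sub>v w = e \<cdot>\<^sub>v w \<and> v \<bullet> w = 0"
proof -
  have n: "n \<noteq> 0" using v v0 by auto
  let ?n1 = "n - 1"
  define b where "b = basis_completion v"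
  define ws where "ws = gram_schmidt n b"
  define W where "W = mat_of_cols n ws"
  define W' where "W' = corthogonal_inv W"
  define A' where "A' = W' * A * W"
  interpret cof_vec_space n "TYPE(real)" .
  from basis_completion[OF v v0, folded b_def]
  have span_b: "span (set b) = carrier_vec n" and dist_b: "distinct b" 
    and indep: "\<not> lin_dep (set b)" and b: "set b \<subseteq> carrier_vec n" and hdb: "hd b = v" 
    and len_b: "length b = n" by auto
  from hdb len_b n obtain vs where bv: "b = v # vs" by (cases b, auto)
  from gram_schmidt_result[OF b dist_b indep refl, folded ws_def]
  have ws: "set ws \<subseteq> carrier_vec n" "corthogonal ws" "length ws = n" 
    by (auto simp: len_b)
  from gram_schmidt_hd[OF v, of vs, folded bv] have hdws: "hd ws = v" unfolding ws_def .
  have orth_W: "corthogonal_mat W" using orthogonal_mat_of_cols ws unfolding W_def.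
  have W: "W \<in> carrier_mat n n"
    using ws unfolding W_def using mat_of_cols_carrier(1)[of n ws] by auto
  have W': "W' \<in> carrier_mat n n" unfolding W'_def corthogonal_inv_def using W 
    by (auto simp: mat_of_rows_def)  
  from corthogonal_inv_result[OF orth_W] 
  have W'W: "inverts_mat W' W" unfolding W'_def .
  hence WW': "inverts_mat W W'" using mat_mult_left_right_inverse[OF W' W] W' W
    unfolding inverts_mat_def by auto
  have W'W1: "W' * W = 1\<^sub>m n" using W'W W' unfolding inverts_mat_def by auto
  have WW'1: "W * W' = 1\<^sub>m n" using WW' W unfolding inverts_mat_def by auto
  have A': "A' \<in> carrier_mat n n" using W W' A unfolding A'_def by auto
  have A'A_wit: "similar_mat_wit A' A W' W"
    by (rule similar_mat_witI[of _ _ n], insert W W' A A' W'W WW', auto simp: A'_def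
    inverts_mat_def)
  hence A'A: "similar_mat A' A" unfolding similar_mat_def by blast
  let ?f = "(\<lambda> i. if i = 0 then e else 0)"
  have col0: "col A' 0 = vec n ?f"
    unfolding A'_def W'_def W_def
    using corthogonal_col_ev_0[OF A v v0 eigen n hdws ws].
  have z2: "0 < length ws" using ws n by auto
  have ws0[simp]: "ws!0 = v" using hd_conv_nth[symmetric] hdws z2 by auto
  have vv: "v \<bullet> v \<noteq> 0" using conjugate_square_eq_0_vec[OF v] v0 by (simp add: vec_conjugate_real)
  have roww0: "row W' 0 = vec_inv v"
    unfolding W'_def W_def corthogonal_inv_def using ws n z2
    using v by (subst mat_of_rows_row, auto)
  have row0: "A' $$ (0, j) = 0" if j: "j < n" "j \<noteq> 0" for j
  proof -
    have wsj: "ws ! j \<in> carrier_vec n" using ws j by auto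
    have "A' $$ (0, j) = (W' * (A * W)) $$ (0, j)" unfolding A'_def using W' A W by auto
    also have "... = row W' 0 \<bullet> col (A * W) j"
      apply (subst index_mult_mat) using W W' A j n by auto
    also have "col (A * W) j = A *\<^sub>v col W j" using A W j by auto
    also have "col W j = ws ! j" unfolding W_def using j ws col_mat_of_cols wsj by auto
    also have "row W' 0 \<bullet> (A *\<^sub>v ws ! j) = (1 / (v \<bullet> v)) * (v \<bullet> (A *\<^sub>v ws ! j))"
      unfolding roww0 vec_inv_def using v wsj A
      by (simp add: vec_conjugate_real smult_scalar_prod_distrib[of v n] )
    also have "v \<bullet> (A *\<^sub>v ws ! j) = (A\<^sup>T *\<^sub>v v) \<bullet> ws ! j"
      using transpose_vec_mult_scalar[OF A wsj v] by simp
    also have "\<dots> = e * (v \<bullet> ws ! j)" using sym eigen v wsj by simp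
    also have "v \<bullet> ws ! j = 0"
      using corthogonalD[OF ws(2) z2, of j] j ws by (simp add: vec_conjugate_real)
    finally show ?thesis by simp
  qed
  from A' n have "dim_row A' = 1 + ?n1" "dim_col A' = 1 + ?n1" by auto
  obtain A1 A2 A0 A3 where splitA': "split_block A' 1 1 = (A1,A2,A0,A3)"
    by (cases "split_block A' 1 1", auto)
  from split_block[OF splitA' \<open>dim_row A' = 1 + ?n1\<close> \<open>dim_col A' = 1 + ?n1\<close>]
  have A2: "A2 \<in> carrier_mat 1 ?n1"
    and A3: "A3 \<in> carrier_mat ?n1 ?n1" 
    and A'block: "A' = four_block_mat A1 A2 A0 A3" by auto
  have A1id: "A1 = mat 1 1 (\<lambda> _. e)"
    using splitA'[unfolded split_block_def Let_def] arg_cong[OF col0, of "\<lambda> v. v $ 0"] A' n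
    by (auto simp: col_def)
  have A1: "A1 \<in> carrier_mat 1 1" unfolding A1id by auto
  {
    fix i
    assume "i < ?n1"
    with arg_cong[OF col0, of "\<lambda> v. v $ Suc i"] A'
    have "A' $$ (Suc i, 0) = 0" by auto
  } note A'0 = this
  have A0id: "A0 = 0\<^sub>m ?n1 1"
    using splitA'[unfolded split_block_def Let_def] A'0 A' by auto
  have A2id: "A2 = 0\<^sub>m 1 ?n1"
    using splitA'[unfolded split_block_def Let_def] row0 A' by auto
  have A3id: "\<And>i j. i < ?n1 \<Longrightarrow> j < ?n1 \<Longrightarrow> A3 $$ (i,j) = A' $$ (Suc i, Suc j)"
    using splitA'[unfolded split_block_def Let_def] A' by auto
  have "char_poly A' = char_poly A" by (rule char_poly_similar[OF A'A])
  also have "char_poly A' = char_poly A1 * char_poly A3" 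
    unfolding A'block A0id
    by (rule char_poly_four_block_zeros_col[OF A1 A2 A3])
  also have "char_poly A1 = [: -e,1 :]"
    by (simp add: A1id char_poly_defs det_def sign_def)
  finally have cp: "char_poly A = [: -e,1 :] * char_poly A3" by simp
  have cpnz: "char_poly A \<noteq> 0" using degree_monic_char_poly[OF A] by auto
  have "Polynomial.order e (char_poly A) = 1 + Polynomial.order e (char_poly A3)"
    using cpnz unfolding cp by (subst order_mult, auto simp: order_linear)
  with ord have "Polynomial.order e (char_poly A3) \<noteq> 0" by auto
  hence "poly (char_poly A3) e = 0" by (simp add: order_root)
  hence "eigenvalue A3 e" using eigenvalue_root_char_poly[OF A3] by simp
  from find_eigenvector[OF A3 this] obtain u where
    u: "u \<in> carrier_vec ?n1" "u \<noteq> 0\<^sub>v ?n1" "A3 *\<^sub>v u = e \<cdot>\<^sub>v u"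
    unfolding eigenvector_def using A3 by auto
  define z where "z = 0\<^sub>v 1 @\<^sub>v u"
  have z: "z \<in> carrier_vec n" unfolding z_def using append_carrier_vec[OF zero_carrier_vec[of 1] u(1)] n by simp
  have z00: "z $ 0 = 0" unfolding z_def using u by auto
  have zi: "\<And>i. i < ?n1 \<Longrightarrow> z $ (Suc i) = u $ i" unfolding z_def using u by auto
  have znz: "z \<noteq> 0\<^sub>v n"
  proof
    assume "z = 0\<^sub>v n"
    hence "u $ i = 0" if i: "i < ?n1" for i
    proof -
      have "Suc i < n" using i by simp
      thus ?thesis using zi[OF i] \<open>z = 0\<^sub>v n\<close> by simp
    qed
    hence "u = 0\<^sub>v ?n1" using u by (intro eq_vecI, auto)
    thus False using u by auto
  qed
  have A'z: "A' *\<^sub>v z = e \<cdot>\<^sub>v z"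
  proof -
    have A0: "A0 \<in> carrier_mat ?n1 1" unfolding A0id by simp
    have "A' *\<^sub>v z = (A1 *\<^sub>v 0\<^sub>v 1 + A2 *\<^sub>v u) @\<^sub>v (A0 *\<^sub>v 0\<^sub>v 1 + A3 *\<^sub>v u)"
      unfolding A'block z_def by (rule four_block_mat_mult_vec[OF A1 A2 A0 A3 zero_carrier_vec u(1)])
    also have "A1 *\<^sub>v 0\<^sub>v 1 + A2 *\<^sub>v u = 0\<^sub>v 1" unfolding A2id using A1 u(1)
      by (intro eq_vecI, auto simp: mult_mat_vec_def scalar_prod_def)
    also have "A0 *\<^sub>v 0\<^sub>v 1 + A3 *\<^sub>v u = e \<cdot>\<^sub>v u" unfolding A0id u(3) using u(1) A3
      by (intro eq_vecI, auto simp: mult_mat_vec_def scalar_prod_def)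
    also have "0\<^sub>v 1 @\<^sub>v (e \<cdot>\<^sub>v u) = e \<cdot>\<^sub>v z" unfolding z_def
      by (rule eq_vecI, insert u(1), auto)
    finally show ?thesis .
  qed
  define y where "y = W *\<^sub>v z"
  have y: "y \<in> carrier_vec n" unfolding y_def using W z by auto
  have AW: "A * W = W * A'"
  proof -
    have "W * A' = (W * W') * A * W" unfolding A'_def using W W' A
      by (simp add: assoc_mult_mat[of _ n n _ n _ n])
    also have "\<dots> = A * W" using WW'1 A W by simp
    finally show ?thesis by simp
  qed
  have "A *\<^sub>v y = (A * W) *\<^sub>v z" unfolding y_def using A W z by simp
  also have "\<dots> = W *\<^sub>v (A' *\<^sub>v z)" unfolding AW using W A' z by simp
  also have "\<dots> = e \<cdot>\<^sub>v y" unfolding A'z y_def using W z by (simp add: mult_mat_vec)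
  finally have Ay: "A *\<^sub>v y = e \<cdot>\<^sub>v y" .
  have W'y: "W' *\<^sub>v y = z" unfolding y_def using W W' z W'W1
    using assoc_mult_mat_vec[OF W' W z, symmetric] one_mult_mat_vec[OF z] by simp
  have ynz: "y \<noteq> 0\<^sub>v n" using W'y znz W' by auto
  have "0 = (W' *\<^sub>v y) $ 0" using W'y z00 by simp
  also have "\<dots> = row W' 0 \<bullet> y" using W' n by simp
  also have "\<dots> = (1 / (v \<bullet> v)) * (v \<bullet> y)"
    unfolding roww0 vec_inv_def using v y
    by (simp add: vec_conjugate_real smult_scalar_prod_distrib[of v n])
  finally have "v \<bullet> y = 0" using vv by simp
  thus ?thesis using y ynz Ay by blast
qed


interpretation rh: map_poly_comm_ring_hom "of_real :: real \<Rightarrow> complex" ..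
interpretation rhi: map_poly_inj_comm_ring_hom "of_real :: real \<Rightarrow> complex" ..

lemma map_prod_lin: "map_poly (of_real :: real \<Rightarrow> complex) (\<Prod>a\<leftarrow>bs. [:- a, 1:]) = (\<Prod>a\<leftarrow>bs. [:- of_real a, 1:])"
  unfolding rh.hom_prod_list map_map o_def by simp

lemma sym_eig_real:
  fixes A :: "real mat" and x :: "complex vec" and a :: complex
  assumes A: "A \<in> carrier_mat n n" and sym: "A\<^sup>T = A"
  and x: "x \<in> carrier_vec n" and x0: "x \<noteq> 0\<^sub>v n"
  and ev: "map_mat of_real A *\<^sub>v x = a \<cdot>\<^sub>v x"
  shows "a \<in> \<real>"
proof -
  have symij: "A $$ (i,j) = A $$ (j,i)" if "i < n" "j < n" for i j
    using arg_cong[OF sym, of "\<lambda>M. M $$ (i,j)"] that A by auto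
  have evi: "(\<Sum>j<n. of_real (A $$ (i,j)) * x$j) = a * x$i" if i: "i < n" for i
  proof -
    have "(map_mat of_real A *\<^sub>v x) $ i = a * x $ i" using ev i x by simp
    thus ?thesis using i A x by (simp add: scalar_prod_def lessThan_atLeast0 ac_simps)
  qed
  define s where "s = (\<Sum>i<n. cnj (x$i) * (\<Sum>j<n. of_real (A $$ (i,j)) * x$j))"
  define N where "N = (\<Sum>i<n. cnj (x$i) * x$i)"
  have sN: "s = a * N" unfolding s_def N_def using evi by (simp add: sum_distrib_left ac_simps)
  have "cnj s = (\<Sum>i<n. \<Sum>j<n. of_real (A $$ (i,j)) * x$i * cnj (x$j))"
    unfolding s_def by (simp add: sum_distrib_left ac_simps)
  also have "\<dots> = (\<Sum>j<n. \<Sum>i<n. of_real (A $$ (i,j)) * x$i * cnj (x$j))"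
    by (rule sum.swap)
  also have "\<dots> = s"
    unfolding s_def sum_distrib_left
    by (intro sum.cong refl, simp add: symij ac_simps)
  finally have cs: "cnj s = s" .
  have Nr: "N = of_real (\<Sum>i<n. (cmod (x$i))^2)"
    unfolding N_def of_real_sum of_real_power
  proof (rule sum.cong[OF refl])
    fix i show "cnj (x$i) * x$i = (of_real (cmod (x$i)))^2"
      using complex_norm_square[of "x$i"] by (simp add: mult.commute)
  qed
  have "\<exists>i<n. x$i \<noteq> 0"
  proof (rule ccontr)
    assume "\<not> ?thesis"
    hence "x = 0\<^sub>v n" using x by (intro eq_vecI, auto)
    thus False using x0 by simp
  qed
  then obtain i where i: "i < n" "x$i \<noteq> 0" by auto
  have "(\<Sum>i<n. (cmod (x$i))^2) > 0"
    by (rule sum_pos2[of _ i], insert i, auto)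
  hence N0: "N \<noteq> 0" unfolding Nr of_real_eq_0_iff by linarith
  have cN: "cnj N = N" unfolding Nr by (simp only: complex_cnj_complex_of_real)
  have "a = s / N" using sN N0 by simp
  hence "cnj a = a" using cs cN by simp
  thus ?thesis by (simp add: Reals_cnj_iff)
qed

lemma poly_prod_lin_root: fixes a :: "'a :: comm_ring_1" shows "a \<in> set as \<Longrightarrow> poly (\<Prod>b\<leftarrow>as. [:- b, 1:]) a = 0"
  by (induct as) (auto simp: algebra_simps)

lemma sym_real_rooted:
  fixes A :: "real mat"
  assumes A: "A \<in> carrier_mat n n" and sym: "A\<^sup>T = A"
  shows "\<exists>bs. char_poly A = (\<Prod>a\<leftarrow>bs. [:- a, 1:]) \<and> length bs = n"
proof -
  define C where "C = map_mat (of_real :: real \<Rightarrow> complex) A"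
  have C: "C \<in> carrier_mat n n" unfolding C_def using A by simp
  have cpC: "char_poly C = map_poly of_real (char_poly A)"
    unfolding C_def using of_real_hom.char_poly_hom[OF A] by simp
  have dm: "degree (char_poly C) = n \<and> coeff (char_poly C) n = 1" using degree_monic_char_poly[OF C] .
  obtain as where as: "Polynomial.smult (lead_coeff (char_poly C)) (\<Prod>a\<leftarrow>as. [:- a, 1:]) = char_poly C"
    "length as = degree (char_poly C)"
    using fundamental_theorem_algebra_factorized by blast
  have cpC2: "char_poly C = (\<Prod>a\<leftarrow>as. [:- a, 1:])" using as(1) dm by simp
  have real: "a \<in> \<real>" if a: "a \<in> set as" for a
  proof -
    have "poly (char_poly C) a = 0" unfolding cpC2 using a by (rule poly_prod_lin_root)
    hence "eigenvalue C a" using eigenvalue_root_char_poly[OF C] by simp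
    then obtain x where "eigenvector C x a" unfolding eigenvalue_def by auto
    hence "x \<in> carrier_vec n" "x \<noteq> 0\<^sub>v n" "C *\<^sub>v x = a \<cdot>\<^sub>v x" unfolding eigenvector_def using C by auto
    thus ?thesis using sym_eig_real[OF A sym] unfolding C_def by blast
  qed
  define bs where "bs = map Re as"
  have asb: "as = map of_real bs" unfolding bs_def map_map o_def
    by (rule map_idI[symmetric], insert real, auto simp: Reals_def)
  have "map_poly of_real (\<Prod>a\<leftarrow>bs. [:- a, 1:]) = char_poly C"
    unfolding map_prod_lin cpC2 asb by (simp add: o_def)
  hence "map_poly (of_real :: real \<Rightarrow> complex) (\<Prod>a\<leftarrow>bs. [:- a, 1:]) = map_poly of_real (char_poly A)"
    unfolding cpC .
  hence "char_poly A = (\<Prod>a\<leftarrow>bs. [:- a, 1:])"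
    by (rule rhi.injectivity[symmetric])
  moreover have "length bs = n" unfolding bs_def using as(2) dm by simp
  ultimately show ?thesis by blast
qed



lemma order_prod_lin: "Polynomial.order (m::real) (\<Prod>a\<leftarrow>bs. [:- a, 1:]) = count_list bs m"
proof (induct bs)
  case Nil show ?case by (simp add: order_1_eq_0)
next
  case (Cons b bs)
  let ?P = "(\<Prod>a\<leftarrow>bs. [:- a, 1:]) :: real poly"
  have "0 \<notin> set (map (\<lambda>a. [:- a, 1:] :: real poly) (b#bs))" by auto
  hence "prod_list (map (\<lambda>a. [:- a, 1:] :: real poly) (b#bs)) \<noteq> 0"
    using prod_list_zero_iff[of "map (\<lambda>a. [:- a, 1:] :: real poly) (b#bs)"] by blast
  hence nz: "[:- b, 1:] * ?P \<noteq> 0" by (simp only: list.map prod_list.Cons not_False_eq_True)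
  have "Polynomial.order m ([:- b, 1:] * ?P) = Polynomial.order m [:- b, 1:] + Polynomial.order m ?P"
    by (rule order_mult[OF nz])
  thus ?case using Cons by (simp add: order_linear')
qed

lemma poly_prod_lin_iff: "poly (\<Prod>a\<leftarrow>bs. [:- a, 1:]) (m::real) = 0 \<longleftrightarrow> m \<in> set bs"
  by (induct bs) auto

lemma spec:
  fixes A :: "real mat"
  assumes A: "A \<in> carrier_mat n n" and sym: "A\<^sup>T = A" and n2: "2 \<le> n"
  and one: "A *\<^sub>v vec n (\<lambda>_. 1) = 0\<^sub>v n"
  shows "\<exists>x \<mu>. x \<in> carrier_vec n \<and> x \<noteq> 0\<^sub>v n \<and> A *\<^sub>v x = \<mu> \<cdot>\<^sub>v x \<and> \<mu> \<le> kth_eigenvalue 2 A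
     \<and> vec n (\<lambda>_. 1) \<bullet> x = 0"
proof -
  obtain bs where cp: "char_poly A = (\<Prod>a\<leftarrow>bs. [:- a, 1:])" and lb: "length bs = n"
    using sym_real_rooted[OF A sym] by blast
  define F where "F t = (\<Sum>\<mu>\<in>{\<mu>\<in>set bs. \<mu> \<le> t}. count_list bs \<mu>)" for t
  define S where "S = {t. 2 \<le> F t}"
  have keq: "kth_eigenvalue 2 A = Inf S"
  proof -
    have "{\<mu>. poly (char_poly A) \<mu> = 0 \<and> \<mu> \<le> t} = {\<mu>\<in>set bs. \<mu> \<le> t}" for t
      unfolding cp poly_prod_lin_iff by auto
    thus ?thesis unfolding kth_eigenvalue_def S_def F_def cp order_prod_lin by simp
  qed
  have down: "\<exists>m\<in>set bs. m \<le> t \<and> m \<in> S" if t: "t \<in> S" for t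
  proof -
    let ?R = "{\<mu>\<in>set bs. \<mu> \<le> t}"
    have "?R \<noteq> {}"
    proof
      assume "?R = {}"
      hence "F t = 0" unfolding F_def by (simp only: sum.empty)
      thus False using t unfolding S_def by simp
    qed
    moreover have fR: "finite ?R" by simp
    ultimately have mR: "Max ?R \<in> ?R" using Max_in by blast
    have "{\<mu>\<in>set bs. \<mu> \<le> Max ?R} = ?R" using mR fR by (auto intro: Max_ge)
    hence "F (Max ?R) = F t" unfolding F_def by simp
    thus ?thesis using mR t unfolding S_def by auto
  qed
  have bsne: "bs \<noteq> []" using lb n2 by auto
  have "Max (set bs) \<in> S"
  proof -
    have "{\<mu>\<in>set bs. \<mu> \<le> Max (set bs)} = set bs" by auto
    hence "F (Max (set bs)) = length bs" unfolding F_def by (simp add: sum_count_set)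
    thus ?thesis unfolding S_def using lb n2 by simp
  qed
  define K where "K = S \<inter> set bs"
  have fK: "finite K" unfolding K_def by simp
  have Kne: "K \<noteq> {}" unfolding K_def using \<open>Max (set bs) \<in> S\<close> bsne by auto
  define lam where "lam = Min K"
  have lamK: "lam \<in> K" unfolding lam_def using fK Kne by simp
  have "Inf S = lam"
  proof (rule cInf_eq_minimum)
    show "lam \<in> S" using lamK unfolding K_def by simp
    fix x assume "x \<in> S"
    then obtain m where "m \<in> set bs" "m \<le> x" "m \<in> S" using down by blast
    hence "lam \<le> m" unfolding lam_def K_def using fK by (intro Min_le) (auto simp: K_def)
    thus "lam \<le> x" using \<open>m \<le> x\<close> by simp
  qed
  hence klam: "kth_eigenvalue 2 A = lam" using keq by simp
  have lamS: "2 \<le> F lam" using lamK unfolding K_def S_def by simp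
  let ?one = "vec n (\<lambda>_. 1 :: real)"
  have one_c: "?one \<in> carrier_vec n" by simp
  show ?thesis
  proof (cases "\<exists>\<mu>\<in>set bs. \<mu> \<le> lam \<and> \<mu> \<noteq> 0")
    case True
    then obtain \<mu> where mu: "\<mu> \<in> set bs" "\<mu> \<le> lam" "\<mu> \<noteq> 0" by blast
    have "poly (char_poly A) \<mu> = 0" unfolding cp poly_prod_lin_iff using mu by simp
    hence "eigenvalue A \<mu>" using eigenvalue_root_char_poly[OF A] by simp
    then obtain x where "eigenvector A x \<mu>" unfolding eigenvalue_def by auto
    hence x: "x \<in> carrier_vec n" "x \<noteq> 0\<^sub>v n" "A *\<^sub>v x = \<mu> \<cdot>\<^sub>v x"
      unfolding eigenvector_def using A by auto
    have "\<mu> * (?one \<bullet> x) = ?one \<bullet> (A *\<^sub>v x)" using x one_c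
      by (simp add: scalar_prod_smult_distrib)
    also have "\<dots> = (A\<^sup>T *\<^sub>v ?one) \<bullet> x" using transpose_vec_mult_scalar[OF A x(1) one_c] by simp
    also have "\<dots> = 0" unfolding sym one using x(1) by simp
    finally have "?one \<bullet> x = 0" using mu(3) by simp
    thus ?thesis using x mu klam by blast
  next
    case False
    let ?R = "{\<mu>\<in>set bs. \<mu> \<le> lam}"
    have "?R \<noteq> {}"
    proof
      assume "?R = {}"
      hence "F lam = 0" unfolding F_def by (simp only: sum.empty)
      thus False using lamS by simp
    qed
    hence R0: "?R = {0}" using False by auto
    hence "2 \<le> count_list bs 0" using lamS unfolding F_def by simp
    hence ord: "2 \<le> Polynomial.order 0 (char_poly A)" unfolding cp order_prod_lin .
    have onz: "?one \<noteq> 0\<^sub>v n"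
    proof
      assume "?one = 0\<^sub>v n"
      hence "?one $ 0 = 0\<^sub>v n $ 0" by simp
      thus False using n2 by simp
    qed
    have ev0: "A *\<^sub>v ?one = 0 \<cdot>\<^sub>v ?one" unfolding one by (intro eq_vecI) auto
    from deflate[OF A sym one_c onz ev0 ord] obtain w where
      w: "w \<in> carrier_vec n" "w \<noteq> 0\<^sub>v n" "A *\<^sub>v w = 0 \<cdot>\<^sub>v w" "?one \<bullet> w = 0" by blast
    have "0 \<le> lam" using R0 by auto
    thus ?thesis using w klam by blast
  qed
qed



lemma mat_vec_index: assumes "A \<in> carrier_mat n n" "v \<in> carrier_vec n" "i < n"
  shows "(A *\<^sub>v v) $ i = (\<Sum>j<n. A $$ (i,j) * v $ j)"
  using assms by (simp add: scalar_prod_def lessThan_atLeast0)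

theorem theorem9:
  fixes V :: "'a set" and E :: "'a set set"
  assumes "hypergraph V E"
    and "card V \<ge> 2"
    and "hconnected V E"
  shows "real (hdiam V E) \<ge>
           4 / (real (card V) * (real (hrank E) - 1) * lambda2 V E)"
proof -
  note H = assms(1) and n2 = assms(2) and conn = assms(3)
  note hf = hyp_facts[OF H]
  define n where "n = card V"
  define f where "f = vertex_enum V"
  have bij: "bij_betw f {0..<n} V" unfolding f_def vertex_enum_def n_def
    by (rule someI_ex[OF ex_bij_betw_nat_finite[OF hf(1)]])
  have fV: "i < n \<Longrightarrow> f i \<in> V" for i using bij by (auto dest: bij_betwE)
  have reidx: "(\<Sum>a\<in>V. h a) = (\<Sum>i<n. h (f i))" for h :: "'a \<Rightarrow> real"
    using sum.reindex_bij_betw[OF bij, of h] by (simp add: lessThan_atLeast0)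
  define L where "L = lap_matrix V E"
  have L: "L \<in> carrier_mat n n" unfolding L_def lap_matrix_def n_def by simp
  have Lij: "i < n \<Longrightarrow> j < n \<Longrightarrow> L $$ (i,j) = hlap E (f i) (f j)" for i j
    unfolding L_def lap_matrix_def f_def n_def by simp
  have sym: "L\<^sup>T = L"
    by (rule eq_matI, insert L, auto simp: Lij hlap_sym)
  have one: "L *\<^sub>v vec n (\<lambda>_. 1) = 0\<^sub>v n"
  proof (rule eq_vecI)
    fix i assume "i < dim_vec (0\<^sub>v n :: real vec)"
    hence i: "i < n" by simp
    have "(L *\<^sub>v vec n (\<lambda>_. 1)) $ i = (\<Sum>j<n. hlap E (f i) (f j))"
      by (subst mat_vec_index[OF L _ i], simp, rule sum.cong, auto simp: Lij i)
    also have "\<dots> = (\<Sum>u\<in>V. hlap E (f i) u)" using reidx by simp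
    also have "\<dots> = 0" by (rule row_sum[OF H fV[OF i]])
    finally show "(L *\<^sub>v vec n (\<lambda>_. 1)) $ i = 0\<^sub>v n $ i" using i by simp
  qed (insert L, auto)
  have n2': "2 \<le> n" using n2 unfolding n_def .
  obtain x \<mu> where x: "x \<in> carrier_vec n" "x \<noteq> 0\<^sub>v n" "L *\<^sub>v x = \<mu> \<cdot>\<^sub>v x"
    and mul: "\<mu> \<le> lambda2 V E" and x1: "vec n (\<lambda>_. 1) \<bullet> x = 0"
    using spec[OF L sym n2' one] unfolding lambda2_def L_def by blast
  define g where "g = inv_into {0..<n} f"
  define y where "y a = x $ (g a)" for a
  have yf: "i < n \<Longrightarrow> y (f i) = x $ i" for i
    unfolding y_def g_def using bij by (simp add: bij_betw_def inv_into_f_f)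
  have sum0: "(\<Sum>a\<in>V. y a) = 0"
  proof -
    have "(\<Sum>a\<in>V. y a) = (\<Sum>i<n. x $ i)" unfolding reidx by (rule sum.cong, auto simp: yf)
    also have "\<dots> = vec n (\<lambda>_. 1) \<bullet> x" using x(1) by (simp add: scalar_prod_def lessThan_atLeast0)
    finally show ?thesis using x1 by simp
  qed
  define S where "S = (\<Sum>a\<in>V. (y a)^2)"
  have S: "S = (\<Sum>i<n. (x $ i)^2)" unfolding S_def reidx by (rule sum.cong, auto simp: yf)
  have Spos: "0 < S"
  proof -
    have "\<exists>i<n. x $ i \<noteq> 0"
    proof (rule ccontr)
      assume "\<not> ?thesis"
      hence "x = 0\<^sub>v n" using x(1) by (intro eq_vecI, auto)
      thus False using x(2) by simp
    qed
    then obtain i where "i < n" "x $ i \<noteq> 0" by auto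
    thus ?thesis unfolding S by (intro sum_pos2[of _ i]) auto
  qed
  have Q: "(\<Sum>e\<in>E. Tq y e) = \<mu> * S"
  proof -
    have "(\<Sum>e\<in>E. Tq y e) = (\<Sum>a\<in>V. \<Sum>b\<in>V. y a * hlap E a b * y b)" by (rule quad[OF H, symmetric])
    also have "\<dots> = (\<Sum>i<n. \<Sum>j<n. x $ i * L $$ (i,j) * x $ j)"
      unfolding reidx by (intro sum.cong refl, auto simp: yf Lij)
    also have "\<dots> = (\<Sum>i<n. x $ i * (L *\<^sub>v x) $ i)"
      by (intro sum.cong refl, simp add: mat_vec_index[OF L x(1)] sum_distrib_left ac_simps)
    also have "\<dots> = (\<Sum>i<n. \<mu> * (x $ i)^2)"
    proof (intro sum.cong refl)
      fix i assume "i \<in> {..<n}"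
      hence "i < dim_vec x" using x(1) by simp
      thus "x $ i * (L *\<^sub>v x) $ i = \<mu> * (x $ i)^2" unfolding x(3) by (simp add: power2_eq_square)
    qed
    also have "\<dots> = \<mu> * S" unfolding S by (simp add: sum_distrib_left)
    finally show ?thesis .
  qed
  have Vne: "V \<noteq> {}" using n2 by auto
  define M where "M = Max (y ` V)"
  define m where "m = Min (y ` V)"
  have "M \<in> y ` V" unfolding M_def using hf(1) Vne by (intro Max_in) auto
  then obtain u where u: "u \<in> V" "y u = M" by auto
  have "m \<in> y ` V" unfolding m_def using hf(1) Vne by (intro Min_in) auto
  then obtain w where w: "w \<in> V" "y w = m" by auto
  have uM: "\<forall>a\<in>V. y a \<le> y u" unfolding u(2) M_def using hf(1) by auto
  have wm: "\<forall>a\<in>V. y w \<le> y a" unfolding w(2) m_def using hf(1) by auto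
  have mm: "4 * S \<le> real n * (y u - y w)^2"
    unfolding S_def n_def by (rule maxmin_bound[OF hf(1) sum0 u(1) w(1) uM wm])
  define D where "D = hdist E u w"
  have "\<exists>l. hpath_between E u w l" using conn u(1) w(1) unfolding hconnected_def by blast
  hence "hpath_between E u w D" unfolding D_def hdist_def by (rule LeastI_ex)
  then obtain vs es where P: "hpath E vs es" "hd vs = u" "last vs = w" "length es = D"
    unfolding hpath_between_def by blast
  define r where "r = hrank E"
  have rE: "\<forall>e\<in>E. card e \<le> r" unfolding r_def hrank_def using hf(2) by auto
  have pb: "(y u - y w)^2 \<le> real D * ((real r - 1) * (\<mu> * S))"
    using path_bound[OF H P(1) rE, of y] unfolding P(2) P(3) P(4) Q .
  have D0: "D \<noteq> 0"
  proof
    assume "D = 0"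
    hence "(y u - y w)^2 \<le> 0" using pb by simp
    hence "(y u - y w)^2 = 0" using zero_le_power2 by (rule antisym)
    hence "4 * S \<le> 0" using mm by simp
    thus False using Spos by simp
  qed
  have r1: "0 \<le> real r - 1"
  proof -
    have "es ! 0 \<in> E" using P(1) P(4) D0 unfolding hpath_def by auto
    hence "2 \<le> card (es ! 0)" "card (es ! 0) \<le> r" using hf(5) rE by auto
    thus ?thesis by simp
  qed
  have "4 * S \<le> real n * (real D * ((real r - 1) * (\<mu> * S)))"
    using mm mult_left_mono[OF pb, of "real n"] by simp
  also have "\<dots> \<le> real n * (real D * ((real r - 1) * (lambda2 V E * S)))"
  proof -
    have "\<mu> * S \<le> lambda2 V E * S" using mul Spos by (intro mult_right_mono) auto
    hence "(real r - 1) * (\<mu> * S) \<le> (real r - 1) * (lambda2 V E * S)" using r1 by (rule mult_left_mono)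
    hence "real D * ((real r - 1) * (\<mu> * S)) \<le> real D * ((real r - 1) * (lambda2 V E * S))"
      by (rule mult_left_mono) simp
    thus ?thesis by (rule mult_left_mono) simp
  qed
  also have "\<dots> = (real n * (real r - 1) * lambda2 V E * real D) * S"
    by (simp only: ac_simps)
  finally have "4 * S \<le> (real n * (real r - 1) * lambda2 V E * real D) * S" .
  hence key: "4 \<le> real n * (real r - 1) * lambda2 V E * real D" using Spos by simp
  define P where "P = real n * (real r - 1) * lambda2 V E"
  have key': "4 \<le> P * real D" using key unfolding P_def .
  have Ppos: "0 < P"
  proof (rule ccontr)
    assume "\<not> 0 < P"
    hence "P * real D \<le> 0" by (simp add: mult_nonpos_nonneg)
    thus False using key' by simp
  qed
  have "4 / P \<le> real D" using key' by (subst pos_divide_le_eq[OF Ppos]) (simp only: mult.commute)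
  also have "D \<le> hdiam V E"
  proof -
    have eq: "{hdist E i j | i j. i \<in> V \<and> j \<in> V} = (\<lambda>(i,j). hdist E i j) ` (V \<times> V)" by auto
    have "finite {hdist E i j | i j. i \<in> V \<and> j \<in> V}" unfolding eq using hf(1) by simp
    moreover have "D \<in> {hdist E i j | i j. i \<in> V \<and> j \<in> V}" unfolding D_def using u(1) w(1) by auto
    ultimately show ?thesis unfolding hdiam_def by (rule Max_ge)
  qed
  finally show ?thesis unfolding P_def n_def r_def by simp
qed

end
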